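(* Let $\mathcal{F}$ be a $(G,[k_1,\dots,k_t],\lambda)$ Hadamard partitioned difference family. Then (i) $k_1+\cdots+k_t=2\lambda$; (ii) $k_1^2+\cdots+k_t^2=\lambda(2\lambda+1)$; (iii) $\lambda$ is even, hence $|G|\equiv 0 \pmod 4$.
   Context: $G$ is a finite group written additively, with difference $x-y:=x+(-y)$. For $B\subseteq G$, $\Delta B$ is the multiset $\{x-y: x,y\in B, x\neq y\}$; for $\mathcal{F}=\{B_1,\dots,B_t\}$, $\Delta\mathcal{F}$ is the multiset union of the $\Delta B_i$. $\mathcal{F}$ is a $(G,[k_1,\dots,k_t],\lambda)$ partitioned difference family (PDF) if the $B_i$ partition $G$, $|B_i|=k_i$, and $\Delta\mathcal{F}$ contains every non-zero element of $G$ exactly $\lambda$ times. It is Hadamard (HPDF) if $|G|=2\lambda$. *)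

theory Defs
  imports Main "HOL-Library.Multiset"
begin

definition diff_mset :: "'a::group_add set \<Rightarrow> 'a multiset" where
  "diff_mset B = image_mset (\<lambda>(x, y). x - y) (mset_set {(x, y). x \<in> B \<and> y \<in> B \<and> x \<noteq> y})"

definition diff_mset_family :: "nat \<Rightarrow> (nat \<Rightarrow> 'a::group_add set) \<Rightarrow> 'a multiset" where
  "diff_mset_family t B = (\<Sum>i<t. diff_mset (B i))"

definition is_PDF :: "nat \<Rightarrow> (nat \<Rightarrow> 'a::{group_add,finite} set) \<Rightarrow> (nat \<Rightarrow> nat) \<Rightarrow> nat \<Rightarrow> bool" where
  "is_PDF t B k lam \<longleftrightarrow>
     (\<forall>i<t. B i \<noteq> {}) \<and>
     (\<forall>i<t. \<forall>j<t. i \<noteq> j \<longrightarrow> B i \<inter> B j = {}) \<and>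
     (\<Union>i<t. B i) = UNIV \<and>
     (\<forall>i<t. card (B i) = k i) \<and>
     (\<forall>g. g \<noteq> 0 \<longrightarrow> count (diff_mset_family t B) g = lam)"

definition is_HPDF :: "nat \<Rightarrow> (nat \<Rightarrow> 'a::{group_add,finite} set) \<Rightarrow> (nat \<Rightarrow> nat) \<Rightarrow> nat \<Rightarrow> bool" where
  "is_HPDF t B k lam \<longleftrightarrow> is_PDF t B k lam \<and> card (UNIV :: 'a set) = 2 * lam"

end

theory Submission
  imports Defs
begin

lemma invol_even:
  fixes f :: "'b \<Rightarrow> 'b"
  assumes "finite A" "\<And>x. x \<in> A \<Longrightarrow> f x \<in> A" "\<And>x. x \<in> A \<Longrightarrow> f (f x) = x"
    "\<And>x. x \<in> A \<Longrightarrow> f x \<noteq> x"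
  shows "even (card A)"
  using assms
proof (induction "card A" arbitrary: A rule: less_induct)
  case less
  show ?case
  proof (cases "A = {}")
    case True then show ?thesis by simp
  next
    case False
    then obtain a where a: "a \<in> A" by blast
    let ?A' = "A - {a, f a}"
    have fa: "f a \<in> A" "f a \<noteq> a" using less a by auto
    have c: "card A = card ?A' + 2"
    proof -
      have "card A = card ?A' + card {a, f a}"
        proof -
        have "{a, f a} \<subseteq> A" using a fa by auto
        moreover have "card (A - {a, f a}) = card A - card {a, f a}" by (rule card_Diff_subset) (use \<open>{a, f a} \<subseteq> A\<close> in auto)
        moreover have "card {a, f a} \<le> card A" by (rule card_mono) (use less(2) \<open>{a, f a} \<subseteq> A\<close> in auto)
        ultimately show ?thesis by linarith
      qed
      moreover have "card {a, f a} = 2" using fa by auto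
      ultimately show ?thesis by simp
    qed
    have "even (card ?A')"
    proof (rule less(1))
      show "card ?A' < card A" using c by simp
      show "finite ?A'" using less by simp
      fix x assume x: "x \<in> ?A'"
      show "f (f x) = x" using x less by auto
      show "f x \<noteq> x" using x less by auto
      have x1: "x \<in> A" "x \<noteq> a" "x \<noteq> f a" using x by auto
      have "f x \<noteq> a" using x1 less(4)[OF a] less(4)[OF x1(1)] by metis
      moreover have "f x \<noteq> f a" using x1 less(4)[OF a] less(4)[OF x1(1)] by metis
      ultimately show "f x \<in> ?A'" using x1 less(3) by auto
    qed
    then show ?thesis using c by simp
  qed
qed

lemma count_diff_mset:
  fixes B :: "'a::{group_add,finite} set"
  shows "count (diff_mset B) g = card {p. p \<in> {(x, y). x \<in> B \<and> y \<in> B \<and> x \<noteq> y} \<and> g = fst p - snd p}"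
proof -
  let ?S = "{(x, y). x \<in> B \<and> y \<in> B \<and> x \<noteq> y}"
  have fin: "finite ?S" by simp
  have "count (diff_mset B) g = (\<Sum>p | p \<in># mset_set ?S \<and> g = (\<lambda>(x, y). x - y) p. count (mset_set ?S) p)"
    unfolding diff_mset_def by (rule count_image_mset')
  also have "\<dots> = (\<Sum>p | p \<in> ?S \<and> g = fst p - snd p. 1)"
    using fin by (intro sum.cong) (auto simp: split_beta)
  finally show ?thesis by simp
qed

lemma size_diff_mset:
  fixes B :: "'a::{group_add,finite} set"
  shows "size (diff_mset B) = card B * card B - card B"
proof -
  have "{(x, y). x \<in> B \<and> y \<in> B \<and> x \<noteq> y} = B \<times> B - (\<lambda>x. (x, x)) ` B" by auto
  moreover have "card ((\<lambda>x. (x, x)) ` B) = card B" by (rule card_image) (auto simp: inj_on_def)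
  moreover have "(\<lambda>x. (x, x)) ` B \<subseteq> B \<times> B" by auto
  ultimately show ?thesis unfolding diff_mset_def
    by (simp add: card_Diff_subset card_cartesian_product)
qed

lemma count_diff_even:
  fixes B :: "'a::{group_add,finite} set"
  assumes "g = - g"
  shows "even (count (diff_mset B) g)"
  unfolding count_diff_mset
proof (rule invol_even[where f = "\<lambda>(x, y). (y, x)"])
  fix p assume p: "p \<in> {p. p \<in> {(x, y). x \<in> B \<and> y \<in> B \<and> x \<noteq> y} \<and> g = fst p - snd p}"
  then obtain x y where [simp]: "p = (x, y)" and h: "x \<in> B" "y \<in> B" "x \<noteq> y" "g = x - y" by auto
  have "y - x = g" using h(4) assms by (metis minus_diff_eq)
  then show "(case p of (x, y) \<Rightarrow> (y, x)) \<in> {p. p \<in> {(x, y). x \<in> B \<and> y \<in> B \<and> x \<noteq> y} \<and> g = fst p - snd p}"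
    using h by auto
  show "(case case p of (x, y) \<Rightarrow> (y, x) of (x, y) \<Rightarrow> (y, x)) = p" by simp
  show "(case p of (x, y) \<Rightarrow> (y, x)) \<noteq> p" using h by auto
qed simp

lemma exists_invol:
  assumes "even (card (UNIV :: 'a::{group_add,finite} set))"
  shows "\<exists>g::'a. g \<noteq> 0 \<and> g = - g"
proof (rule ccontr)
  assume na: "\<not> ?thesis"
  have "even (card {g::'a. g \<noteq> - g})"
    by (rule invol_even[where f = uminus]) (auto simp: minus_equation_iff)
  moreover have "{g::'a. g \<noteq> - g} = UNIV - {0}" using na by auto
  ultimately have "even (card (UNIV::'a set) - 1)" by (simp add: card_Diff_subset)
  moreover have "card (UNIV::'a set) \<ge> 1"
    by (simp add: Suc_leI finite_UNIV_card_ge_0)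
  ultimately show False using assms by (metis One_nat_def dvd_diffD1 even_Suc odd_one)
qed

theorem proposition3p1:
  fixes B :: "nat \<Rightarrow> 'a::{group_add,finite} set" and k :: "nat \<Rightarrow> nat"
    and t lam :: nat
  assumes "is_HPDF t B k lam"
  shows "(\<Sum>i<t. k i) = 2 * lam
    \<and> (\<Sum>i<t. (k i)^2) = lam * (2 * lam + 1)
    \<and> even lam
    \<and> card (UNIV :: 'a set) mod 4 = 0"
proof -
  have ne: "\<forall>i<t. B i \<noteq> {}" and disj: "\<forall>i<t. \<forall>j<t. i \<noteq> j \<longrightarrow> B i \<inter> B j = {}"
    and un: "(\<Union>i<t. B i) = UNIV" and kk: "\<forall>i<t. card (B i) = k i"
    and cnt: "\<forall>g. g \<noteq> 0 \<longrightarrow> count (diff_mset_family t B) g = lam"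
    and cardG: "card (UNIV :: 'a set) = 2 * lam"
    using assms unfolding is_HPDF_def is_PDF_def by auto
  have s1: "(\<Sum>i<t. k i) = 2 * lam"
  proof -
    have "card (\<Union>i<t. B i) = (\<Sum>i<t. card (B i))"
      by (rule card_UN_disjoint) (use disj in auto)
    then show ?thesis using un kk cardG by simp
  qed
  have c0: "count (diff_mset_family t B) 0 = 0"
    unfolding diff_mset_family_def count_sum count_diff_mset by simp
  have "size (diff_mset_family t B) = (\<Sum>g\<in>UNIV. count (diff_mset_family t B) g)"
    by (subst size_multiset_overloaded_eq) (rule sum.mono_neutral_left, auto simp: not_in_iff)
  also have "\<dots> = (\<Sum>g\<in>UNIV - {0}. count (diff_mset_family t B) g)"
    using c0 by (intro sum.mono_neutral_right) auto
  also have "\<dots> = (\<Sum>g\<in>UNIV - {0::'a}. lam)"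
    using cnt by (intro sum.cong) auto
  also have "\<dots> = lam * (2 * lam - 1)" using cardG by (simp add: card_Diff_subset)
  finally have sz: "size (diff_mset_family t B) = lam * (2 * lam - 1)" .
  have "size (diff_mset_family t B) = (\<Sum>i<t. k i * k i - k i)"
    unfolding diff_mset_family_def
  proof -
    have "size (\<Sum>i<t. diff_mset (B i)) = (\<Sum>i<t. size (diff_mset (B i)))"
      by (induction t) auto
    also have "\<dots> = (\<Sum>i<t. k i * k i - k i)" using kk by (simp add: size_diff_mset)
    finally show "size (\<Sum>i<t. diff_mset (B i)) = (\<Sum>i<t. k i * k i - k i)" .
  qed
  then have "(\<Sum>i<t. k i * k i - k i) = lam * (2 * lam - 1)" using sz by simp
  moreover have "(\<Sum>i<t. (k i)^2) = (\<Sum>i<t. k i * k i - k i) + (\<Sum>i<t. k i)"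
  proof -
    have "\<And>i. (k i)^2 = (k i * k i - k i) + k i"
    proof -
      fix i
      have "k i \<le> k i * k i" by (cases "k i") simp_all
      then show "(k i)^2 = (k i * k i - k i) + k i" by (simp add: power2_eq_square)
    qed
    then have "(\<Sum>i<t. (k i)^2) = (\<Sum>i<t. (k i * k i - k i) + k i)" by (rule sum.cong[OF refl])
    also have "\<dots> = (\<Sum>i<t. k i * k i - k i) + (\<Sum>i<t. k i)" by (rule sum.distrib)
    finally show ?thesis .
  qed
  moreover have "lam * (2 * lam - 1) + 2 * lam = lam * (2 * lam + 1)"
    by (cases lam) (simp_all add: algebra_simps)
  ultimately have s2: "(\<Sum>i<t. (k i)^2) = lam * (2 * lam + 1)" using s1
    by linarith
  have "even (card (UNIV :: 'a set))" using cardG by simp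
  then obtain g :: 'a where g: "g \<noteq> 0" "g = - g" using exists_invol by blast
  have "even (count (diff_mset_family t B) g)"
    unfolding diff_mset_family_def count_sum
    by (rule dvd_sum) (rule count_diff_even[OF g(2)])
  moreover have "count (diff_mset_family t B) g = lam" using cnt g(1) by blast
  ultimately have ev: "even lam" by simp
  then obtain m where "lam = 2 * m" by blast
  then have "card (UNIV :: 'a set) mod 4 = 0" using cardG by simp
  then show ?thesis using s1 s2 ev by blast
qed

end
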